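(* Let $\theta$ be a real antisymmetric $N\times N$ matrix. For every unitary $U\in\mathbb{M}_n(\mathcal{A}_\theta^\infty)$ there exists a permutation $\rho\in\sigma_n$ such that the entry $U_{i\rho(i)}$ is non-zero for all $i=1,\dots,n$.
   Context: $\mathcal{A}_\theta$ is the universal $C^*$-algebra generated by unitaries $u_1,\dots,u_N$ with $u_ku_l=\exp(2\pi i\theta_{kl})u_lu_k$, and $\mathcal{A}_\theta^\infty$ is the smooth subalgebra consisting of elements $a$ for which $z\mapsto\sigma_z(a)$ is smooth, where $\sigma_z(u^\alpha)=z^\alpha u^\alpha$ for $z\in\mathbb{T}^N$. $\sigma_n$ is the symmetric group on $\{1,\dots,n\}$. *)

theory Defs
  imports "HOL-Analysis.Analysis" "HOL-Combinatorics.Permutations"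
begin

text \<open>Model of the smooth noncommutative torus: an element a = sum_alpha a_alpha u^alpha
  of A_theta^infty is identified with its Fourier coefficient sequence on Z^N,
  which is rapidly decreasing. Multi-indices are functions nat => int vanishing
  outside {0..<N}; u^alpha = u_1^(alpha_1) ... u_N^(alpha_N) (0-based indices here).\<close>

type_synonym mindex = "nat \<Rightarrow> int"

definition ZN :: "nat \<Rightarrow> mindex set" where
  "ZN N = {\<alpha>. \<forall>k\<ge>N. \<alpha> k = 0}"

text \<open>u^alpha u^beta = cocyc alpha beta * u^(alpha+beta), using u_k u_l = e(theta_kl) u_l u_k.\<close>
definition cocyc :: "nat \<Rightarrow> (nat \<Rightarrow> nat \<Rightarrow> real) \<Rightarrow> mindex \<Rightarrow> mindex \<Rightarrow> complex" where
  "cocyc N \<theta> \<alpha> \<beta> =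
     exp (2 * of_real pi * \<i> * of_real (\<Sum>k<N. \<Sum>l<k. of_int (\<alpha> k) * of_int (\<beta> l) * \<theta> k l))"

definition smooth_elem :: "nat \<Rightarrow> (mindex \<Rightarrow> complex) \<Rightarrow> bool" where
  "smooth_elem N a \<longleftrightarrow> (\<forall>\<alpha>. \<alpha> \<notin> ZN N \<longrightarrow> a \<alpha> = 0) \<and>
     (\<forall>m::nat. \<exists>C. \<forall>\<alpha>\<in>ZN N. (1 + real (\<Sum>k<N. nat \<bar>\<alpha> k\<bar>)) ^ m * cmod (a \<alpha>) \<le> C)"

definition nct_mult :: "nat \<Rightarrow> (nat \<Rightarrow> nat \<Rightarrow> real) \<Rightarrow> (mindex \<Rightarrow> complex) \<Rightarrow> (mindex \<Rightarrow> complex) \<Rightarrow> (mindex \<Rightarrow> complex)" where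
  "nct_mult N \<theta> a b = (\<lambda>\<gamma>. \<Sum>\<^sub>\<infinity>\<alpha>\<in>ZN N. a \<alpha> * b (\<lambda>k. \<gamma> k - \<alpha> k) * cocyc N \<theta> \<alpha> (\<lambda>k. \<gamma> k - \<alpha> k))"

text \<open>(u^alpha)^* = cocyc alpha alpha * u^(-alpha).\<close>
definition nct_star :: "nat \<Rightarrow> (nat \<Rightarrow> nat \<Rightarrow> real) \<Rightarrow> (mindex \<Rightarrow> complex) \<Rightarrow> (mindex \<Rightarrow> complex)" where
  "nct_star N \<theta> a = (\<lambda>\<beta>. cnj (a (\<lambda>k. - \<beta> k)) * cocyc N \<theta> \<beta> \<beta>)"

definition nct_one :: "mindex \<Rightarrow> complex" where
  "nct_one = (\<lambda>\<alpha>. if \<alpha> = (\<lambda>_. 0) then 1 else 0)"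

definition nct_zero :: "mindex \<Rightarrow> complex" where
  "nct_zero = (\<lambda>_. 0)"

type_synonym nct_matrix = "nat \<Rightarrow> nat \<Rightarrow> (mindex \<Rightarrow> complex)"

definition mat_mult :: "nat \<Rightarrow> (nat \<Rightarrow> nat \<Rightarrow> real) \<Rightarrow> nat \<Rightarrow> nct_matrix \<Rightarrow> nct_matrix \<Rightarrow> nct_matrix" where
  "mat_mult N \<theta> n A B = (\<lambda>i j \<gamma>. \<Sum>k<n. nct_mult N \<theta> (A i k) (B k j) \<gamma>)"

definition mat_star :: "nat \<Rightarrow> (nat \<Rightarrow> nat \<Rightarrow> real) \<Rightarrow> nct_matrix \<Rightarrow> nct_matrix" where
  "mat_star N \<theta> A = (\<lambda>i j. nct_star N \<theta> (A j i))"

definition mat_id :: nct_matrix where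
  "mat_id = (\<lambda>i j. if i = j then nct_one else nct_zero)"

definition smooth_unitary :: "nat \<Rightarrow> (nat \<Rightarrow> nat \<Rightarrow> real) \<Rightarrow> nat \<Rightarrow> nct_matrix \<Rightarrow> bool" where
  "smooth_unitary N \<theta> n U \<longleftrightarrow>
     (\<forall>i<n. \<forall>j<n. smooth_elem N (U i j)) \<and>
     (\<forall>i<n. \<forall>j<n. mat_mult N \<theta> n (mat_star N \<theta> U) U i j = mat_id i j) \<and>
     (\<forall>i<n. \<forall>j<n. mat_mult N \<theta> n U (mat_star N \<theta> U) i j = mat_id i j)"

end

theory Submission
  imports Defs
begin


lemma hall:
  fixes I :: "'i set" and A :: "'i \<Rightarrow> 'a set"
  assumes "finite I" and "\<forall>S\<subseteq>I. card S \<le> card (\<Union> (A ` S))"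
  shows "\<exists>f. inj_on f I \<and> (\<forall>i\<in>I. f i \<in> A i)"
  using assms
proof (induction "card I" arbitrary: I A rule: less_induct)
  case less
  note fin = less.prems(1) and H = less.prems(2)
  show ?case
  proof (cases "I = {}")
    case True then show ?thesis by auto
  next
    case ne: False
    show ?thesis
    proof (cases "\<exists>S. S \<noteq> {} \<and> S \<subset> I \<and> card S = card (\<Union> (A ` S))")
      case False
      then have strict: "\<And>S. S \<noteq> {} \<Longrightarrow> S \<subset> I \<Longrightarrow> card S < card (\<Union> (A ` S))"
        using H by (meson le_neq_implies_less psubset_imp_subset)
      obtain i0 where i0: "i0 \<in> I" using ne by auto
      have "card {i0} \<le> card (A i0)" using H i0 by (metis bot.extremum ccpo_Sup_singleton image_insert image_empty insert_subset)
      then have "A i0 \<noteq> {}" by auto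
      then obtain x where x: "x \<in> A i0" by auto
      define I' where "I' = I - {i0}"
      define A' where "A' = (\<lambda>i. A i - {x})"
      have cI': "card I' < card I" unfolding I'_def using fin i0 by (meson card_Diff1_less)
      have H': "\<forall>S\<subseteq>I'. card S \<le> card (\<Union> (A' ` S))"
      proof (intro allI impI)
        fix S assume S: "S \<subseteq> I'"
        show "card S \<le> card (\<Union> (A' ` S))"
        proof (cases "S = {}")
          case True then show ?thesis by simp
        next
          case False
          have "S \<subset> I" using S i0 unfolding I'_def by auto
          then have lt: "card S < card (\<Union> (A ` S))" using strict False by auto
          then have finU: "finite (\<Union> (A ` S))" using card.infinite by fastforce
          have "\<Union> (A' ` S) = \<Union> (A ` S) - {x}" unfolding A'_def by auto
          moreover have "card (\<Union> (A ` S) - {x}) \<ge> card (\<Union> (A ` S)) - 1"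
            using diff_card_le_card_Diff[of "{x}" "\<Union> (A ` S)"] by simp
          ultimately show ?thesis using lt by simp
        qed
      qed
      have finI': "finite I'" using fin I'_def by auto
      obtain f where f: "inj_on f I'" "\<forall>i\<in>I'. f i \<in> A' i"
        using less.hyps[OF cI' finI' H'] by blast
      define g where "g = (\<lambda>i. if i = i0 then x else f i)"
      have "inj_on g I"
        unfolding inj_on_def
      proof (intro ballI impI)
        fix a b assume a: "a \<in> I" and b: "b \<in> I" and e: "g a = g b"
        show "a = b"
        proof (cases "a = i0"; cases "b = i0")
          assume "a = i0" "b \<noteq> i0"
          then have "g b \<in> A' b" using f b I'_def g_def by auto
          then show ?thesis using e \<open>a = i0\<close> g_def A'_def by auto
        next
          assume "a \<noteq> i0" "b = i0"
          then have "g a \<in> A' a" using f a I'_def g_def by auto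
          then show ?thesis using e \<open>b = i0\<close> g_def A'_def by auto
        next
          assume "a \<noteq> i0" "b \<noteq> i0"
          then show ?thesis using f(1) e a b I'_def g_def unfolding inj_on_def by auto
        qed simp
      qed
      moreover have "\<forall>i\<in>I. g i \<in> A i"
        using f(2) x unfolding g_def A'_def I'_def by auto
      ultimately show ?thesis by blast
    next
      case True
      then obtain S where S: "S \<noteq> {}" "S \<subset> I" "card S = card (\<Union> (A ` S))" by blast
      have finS: "finite S" using S fin finite_subset by blast
      have cS: "card S < card I" using S fin psubset_card_mono by blast
      have HS: "\<forall>T\<subseteq>S. card T \<le> card (\<Union> (A ` T))" using H S by auto
      obtain f1 where f1: "inj_on f1 S" "\<forall>i\<in>S. f1 i \<in> A i"
        using less.hyps[OF cS finS HS] by blast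
      define U where "U = \<Union> (A ` S)"
      have finU: "finite U" using S finS U_def card_gt_0_iff card.infinite by fastforce
      define I2 where "I2 = I - S"
      define A2 where "A2 = (\<lambda>i. A i - U)"
      have c2: "card I2 < card I"
      proof -
        have "card (I - S) = card I - card S" using S finS by (simp add: card_Diff_subset psubset_imp_subset)
        moreover have "card S > 0" using S finS by auto
        ultimately show ?thesis using cS by (simp add: I2_def)
      qed
      have fin2: "finite I2" using fin I2_def by auto
      have H2: "\<forall>T\<subseteq>I2. card T \<le> card (\<Union> (A2 ` T))"
      proof (intro allI impI)
        fix T assume T: "T \<subseteq> I2"
        have "T \<union> S \<subseteq> I" using T S I2_def by auto
        then have "card (T \<union> S) \<le> card (\<Union> (A ` (T \<union> S)))" using H by blast
        moreover have "card (T \<union> S) = card T + card S"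
        proof (rule card_Un_disjoint)
          show "finite T" using T fin2 finite_subset by blast
          show "finite S" by (rule finS)
          show "T \<inter> S = {}" using T I2_def by auto
        qed
        moreover have "\<Union> (A2 ` T) = \<Union> (A ` (T \<union> S)) - U" unfolding A2_def U_def by auto
        then have "card (\<Union> (A2 ` T)) = card (\<Union> (A ` (T \<union> S)) - U)" by simp
        moreover have "card (\<Union> (A ` (T \<union> S))) - card U \<le> card (\<Union> (A ` (T \<union> S)) - U)"
          using diff_card_le_card_Diff[OF finU] by blast
        moreover have "card S = card U" using S(3) U_def by simp
        ultimately show "card T \<le> card (\<Union> (A2 ` T))" by linarith
      qed
      obtain f2 where f2: "inj_on f2 I2" "\<forall>i\<in>I2. f2 i \<in> A2 i"
        using less.hyps[OF c2 fin2 H2] by blast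
      define g where "g = (\<lambda>i. if i \<in> S then f1 i else f2 i)"
      have gin: "\<forall>i\<in>I. g i \<in> A i" using f1(2) f2(2) unfolding g_def A2_def I2_def by auto
      have "inj_on g I"
        unfolding inj_on_def
      proof (intro ballI impI)
        fix a b assume a: "a \<in> I" and b: "b \<in> I" and e: "g a = g b"
        have U1: "i \<in> S \<Longrightarrow> g i \<in> U" for i using f1(2) g_def U_def by auto
        have U2: "i \<in> I \<Longrightarrow> i \<notin> S \<Longrightarrow> g i \<notin> U" for i using f2(2) g_def A2_def I2_def by auto
        show "a = b"
        proof (cases "a \<in> S"; cases "b \<in> S")
          assume "a \<in> S" "b \<in> S" then show ?thesis using f1(1) e g_def unfolding inj_on_def by auto
        next
          assume "a \<notin> S" "b \<notin> S" then show ?thesis using f2(1) e g_def a b I2_def unfolding inj_on_def by auto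
        next
          assume "a \<in> S" "b \<notin> S" then show ?thesis using U1 U2 e b by metis
        next
          assume "a \<notin> S" "b \<in> S" then show ?thesis using U1 U2 e a by metis
        qed
      qed
      with gin show ?thesis by blast
    qed
  qed
qed



lemma of_real_infsum_c:
  "infsum (\<lambda>x. complex_of_real (g x)) A = of_real (infsum g A)"
proof (cases "g summable_on A")
  case True
  then show ?thesis using infsumI[OF has_sum_of_real[OF has_sum_infsum[OF True]]] by simp
next
  case False
  have "\<not> (\<lambda>x. complex_of_real (g x)) summable_on A"
  proof
    assume "(\<lambda>x. complex_of_real (g x)) summable_on A"
    from summable_on_Re[OF this] show False using False by simp
  qed
  then show ?thesis using False by (simp add: infsum_not_exists)
qed

definition negm :: "mindex \<Rightarrow> mindex" where "negm \<alpha> = (\<lambda>k. - \<alpha> k)"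

lemma cocyc_negneg: "cocyc N \<theta> (negm \<alpha>) (negm \<alpha>) = cocyc N \<theta> \<alpha> \<alpha>"
  unfolding cocyc_def negm_def by simp

lemma cocyc_inv: "cocyc N \<theta> \<alpha> \<alpha> * cocyc N \<theta> \<alpha> (negm \<alpha>) = 1"
proof -
  have "(\<Sum>k<N. \<Sum>l<k. of_int (\<alpha> k) * of_int (negm \<alpha> l) * \<theta> k l)
      = - (\<Sum>k<N. \<Sum>l<k. of_int (\<alpha> k) * of_int (\<alpha> l) * \<theta> k l)"
    unfolding negm_def by (simp add: sum_negf[symmetric])
  then show ?thesis unfolding cocyc_def
    by (simp add: exp_add[symmetric] algebra_simps)
qed


lemma row_val:
  "nct_mult N \<theta> a (nct_star N \<theta> a) (\<lambda>_. 0) = of_real (infsum (\<lambda>\<alpha>. (cmod (a \<alpha>))^2) (ZN N))"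
proof -
  have "nct_mult N \<theta> a (nct_star N \<theta> a) (\<lambda>_. 0) = infsum (\<lambda>\<alpha>. complex_of_real ((cmod (a \<alpha>))^2)) (ZN N)"
    unfolding nct_mult_def
  proof (rule infsum_cong)
    fix \<alpha>
    have e1: "(\<lambda>k. (0::int) - \<alpha> k) = negm \<alpha>" by (simp add: negm_def)
    have e2: "(\<lambda>k. - negm \<alpha> k) = \<alpha>" by (simp add: negm_def)
    show "a \<alpha> * nct_star N \<theta> a (\<lambda>k. 0 - \<alpha> k) * cocyc N \<theta> \<alpha> (\<lambda>k. 0 - \<alpha> k) = complex_of_real ((cmod (a \<alpha>))^2)"
      unfolding e1 nct_star_def e2 cocyc_negneg
      using cocyc_inv[of N \<theta> \<alpha>]
      by (simp add: complex_norm_square mult.assoc) (simp add: complex_norm_square[symmetric])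
  qed
  then show ?thesis using of_real_infsum_c[of "\<lambda>\<alpha>. (cmod (a \<alpha>))^2" "ZN N"] by simp
qed

lemma bij_negm: "bij_betw negm (ZN N) (ZN N)"
  by (rule bij_betwI[where g=negm]) (auto simp: negm_def ZN_def)

lemma col_val:
  "nct_mult N \<theta> (nct_star N \<theta> a) a (\<lambda>_. 0) = of_real (infsum (\<lambda>\<alpha>. (cmod (a \<alpha>))^2) (ZN N))"
proof -
  have "nct_mult N \<theta> (nct_star N \<theta> a) a (\<lambda>_. 0) = infsum (\<lambda>\<alpha>. complex_of_real ((cmod (a (negm \<alpha>)))^2)) (ZN N)"
    unfolding nct_mult_def
  proof (rule infsum_cong)
    fix \<alpha>
    have e1: "(\<lambda>k. (0::int) - \<alpha> k) = negm \<alpha>" by (simp add: negm_def)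
    have e2: "(\<lambda>k. - \<alpha> k) = negm \<alpha>" by (simp add: negm_def)
    show "nct_star N \<theta> a \<alpha> * a (\<lambda>k. 0 - \<alpha> k) * cocyc N \<theta> \<alpha> (\<lambda>k. 0 - \<alpha> k) = complex_of_real ((cmod (a (negm \<alpha>)))^2)"
      unfolding e1 nct_star_def e2
      using cocyc_inv[of N \<theta> \<alpha>]
      by (simp add: complex_norm_square mult.commute mult.left_commute) (simp add: complex_norm_square[symmetric])
  qed
  also have "\<dots> = of_real (infsum (\<lambda>\<alpha>. (cmod (a (negm \<alpha>)))^2) (ZN N))"
    using of_real_infsum_c[of "\<lambda>\<alpha>. (cmod (a (negm \<alpha>)))^2" "ZN N"] by simp
  also have "infsum (\<lambda>\<alpha>. (cmod (a (negm \<alpha>)))^2) (ZN N) = infsum (\<lambda>\<alpha>. (cmod (a \<alpha>))^2) (ZN N)"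
    using infsum_reindex_bij_betw[OF bij_negm, of "\<lambda>\<alpha>. (cmod (a \<alpha>))^2" N] by simp
  finally show ?thesis .
qed



lemma ds_perm:
  fixes P :: "nat \<Rightarrow> nat \<Rightarrow> real"
  assumes nn: "\<And>i j. 0 \<le> P i j"
    and rows: "\<And>i. i < n \<Longrightarrow> (\<Sum>j<n. P i j) = 1"
    and cols: "\<And>j. j < n \<Longrightarrow> (\<Sum>i<n. P i j) = 1"
  shows "\<exists>\<rho>. \<rho> permutes {..<n} \<and> (\<forall>i<n. P i (\<rho> i) > 0)"
proof -
  define A where "A = (\<lambda>i. {j. j < n \<and> P i j > 0})"
  have H: "\<forall>S\<subseteq>{..<n}. card S \<le> card (\<Union> (A ` S))"
  proof (intro allI impI)
    fix S assume S: "S \<subseteq> {..<n}"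
    define T where "T = \<Union> (A ` S)"
    have T: "T \<subseteq> {..<n}" unfolding T_def A_def by auto
    have finS: "finite S" using S finite_subset by blast
    have finT: "finite T" using T finite_subset by blast
    have "real (card S) = (\<Sum>i\<in>S. \<Sum>j<n. P i j)"
      using rows S by (simp add: subset_eq)
    also have "\<dots> = (\<Sum>i\<in>S. \<Sum>j\<in>T. P i j)"
    proof (rule sum.cong[OF refl])
      fix i assume i: "i \<in> S"
      show "(\<Sum>j<n. P i j) = (\<Sum>j\<in>T. P i j)"
      proof -
        have z: "\<forall>j\<in>{..<n} - T. P i j = 0"
        proof
          fix j assume "j \<in> {..<n} - T"
          then have "\<not> P i j > 0" using i unfolding T_def A_def by auto
          then show "P i j = 0" using nn[of i j] by linarith
        qed
        show ?thesis using sum.mono_neutral_right[OF _ T z] by simp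
      qed
    qed
    also have "\<dots> \<le> (\<Sum>i<n. \<Sum>j\<in>T. P i j)"
      by (rule sum_mono2) (use S nn in \<open>auto intro: sum_nonneg\<close>)
    also have "\<dots> = (\<Sum>j\<in>T. \<Sum>i<n. P i j)" by (rule sum.swap)
    also have "\<dots> = real (card T)"
      using cols T by (simp add: subset_eq)
    finally show "card S \<le> card (\<Union> (A ` S))" unfolding T_def by linarith
  qed
  obtain f where f: "inj_on f {..<n}" "\<forall>i\<in>{..<n}. f i \<in> A i"
    using hall[OF _ H] by blast
  define \<rho> where "\<rho> = (\<lambda>i. if i < n then f i else i)"
  have "\<rho> permutes {..<n}"
  proof (rule inj_imp_permutes)
    show "inj_on \<rho> {..<n}" using f(1) unfolding inj_on_def \<rho>_def by auto
    show "\<And>x. x \<in> {..<n} \<Longrightarrow> \<rho> x \<in> {..<n}" using f(2) unfolding \<rho>_def A_def by auto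
    show "\<And>i. i \<notin> {..<n} \<Longrightarrow> \<rho> i = i" unfolding \<rho>_def by auto
  qed simp
  moreover have "\<forall>i<n. P i (\<rho> i) > 0" using f(2) unfolding \<rho>_def A_def by auto
  ultimately show ?thesis by blast
qed

theorem mainTheorem3:
  fixes N n :: nat and \<theta> :: "nat \<Rightarrow> nat \<Rightarrow> real" and U :: nct_matrix
  assumes "\<forall>k<N. \<forall>l<N. \<theta> k l = - \<theta> l k"
    and "smooth_unitary N \<theta> n U"
  shows "\<exists>\<rho>. \<rho> permutes {..<n} \<and> (\<forall>i<n. U i (\<rho> i) \<noteq> nct_zero)"
proof -
  define P where "P = (\<lambda>i j. infsum (\<lambda>\<alpha>. (cmod (U i j \<alpha>))^2) (ZN N))"
  have nn: "\<And>i j. 0 \<le> P i j" unfolding P_def by (rule infsum_nonneg) simp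
  have u1: "\<forall>i<n. \<forall>j<n. mat_mult N \<theta> n (mat_star N \<theta> U) U i j = mat_id i j"
   and u2: "\<forall>i<n. \<forall>j<n. mat_mult N \<theta> n U (mat_star N \<theta> U) i j = mat_id i j"
    using assms(2) unfolding smooth_unitary_def by auto
  have rows: "(\<Sum>j<n. P i j) = 1" if i: "i < n" for i
  proof -
    have "mat_mult N \<theta> n U (mat_star N \<theta> U) i i (\<lambda>_. 0) = 1"
      using u2 i by (simp add: mat_id_def nct_one_def)
    then have "(\<Sum>k<n. complex_of_real (P i k)) = 1"
      unfolding mat_mult_def mat_star_def P_def by (simp add: row_val)
    then show ?thesis by (metis of_real_eq_1_iff of_real_sum)
  qed
  have cols: "(\<Sum>i<n. P i j) = 1" if j: "j < n" for j
  proof -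
    have "mat_mult N \<theta> n (mat_star N \<theta> U) U j j (\<lambda>_. 0) = 1"
      using u1 j by (simp add: mat_id_def nct_one_def)
    then have "(\<Sum>k<n. complex_of_real (P k j)) = 1"
      unfolding mat_mult_def mat_star_def P_def by (simp add: col_val)
    then show ?thesis by (metis of_real_eq_1_iff of_real_sum)
  qed
  obtain \<rho> where \<rho>: "\<rho> permutes {..<n}" "\<forall>i<n. P i (\<rho> i) > 0"
    using ds_perm[of P n, OF nn rows cols] by blast
  have "U i (\<rho> i) \<noteq> nct_zero" if "i < n" for i
  proof
    assume "U i (\<rho> i) = nct_zero"
    then have "P i (\<rho> i) = 0" unfolding P_def nct_zero_def by simp
    then show False using \<rho>(2) that by auto
  qed
  with \<rho>(1) show ?thesis by blast
qed

end
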